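(* Let $X$ be a finite set with $|X|=n$, $0\notin X$, $W=X\cup\{0\}$. Let $\mathfrak{V}$ be a $\big(\binom{n}{2}_{\,n-2}\ \binom{n}{3}_{\,3}\big)$-configuration whose point set is $\mathcal{P}_2(X)$, and let $\mathfrak{M}$ be the structure with point set $\mathcal{P}_2(W)$ whose lines are the lines of $\mathfrak{V}$ together with all sets $\{\{0,x\},\{0,y\},\{x,y\}\}$ for distinct $x,y\in X$. Let $H$ be a hyperplane of $\mathfrak{M}$, and on $X$ define $x\sim y$ iff $x=y$, or $x\neq y$ and $\{x,y\}\in H$ (an equivalence relation). Let $x\in X$. If there is $z\in[x]_\sim$ with $\{0,z\}\in H$, then $\{0,y\}\in H$ for every $y\in[x]_\sim$.
   Context: $\mathcal{P}_2(Y)$ denotes the set of $2$-element subsets of $Y$; $[x]_\sim$ is the equivalence class of $x$. A $(v_r\ b_k)$-configuration is a partial linear space with $v$ points and $b$ lines, each point on exactly $r$ lines and each line containing exactly $k$ points. A subspace is a set of points containing every line that meets it in at least two points; a hyperplane is a proper subspace meeting every line. (A point $x\in X$ of the original description is identified with the point $\{0,x\}$.) *)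

theory Defs
  imports Main
begin

definition P2 :: "'a set \<Rightarrow> 'a set set" where
  "P2 Y = {e. e \<subseteq> Y \<and> card e = 2}"

definition partial_linear_space :: "'p set \<Rightarrow> 'p set set \<Rightarrow> bool" where
  "partial_linear_space P L \<longleftrightarrow>
     (\<forall>l\<in>L. l \<subseteq> P \<and> finite l \<and> card l \<ge> 2) \<and>
     (\<forall>p\<in>P. \<forall>q\<in>P. p \<noteq> q \<longrightarrow> card {l\<in>L. p \<in> l \<and> q \<in> l} \<le> 1)"

definition configuration :: "'p set \<Rightarrow> 'p set set \<Rightarrow> nat \<Rightarrow> nat \<Rightarrow> nat \<Rightarrow> nat \<Rightarrow> bool" where
  "configuration P L v r b k \<longleftrightarrow>
     partial_linear_space P L \<and> finite P \<and> finite L \<and>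
     card P = v \<and> card L = b \<and>
     (\<forall>p\<in>P. card {l\<in>L. p \<in> l} = r) \<and>
     (\<forall>l\<in>L. card l = k)"

definition subspace :: "'p set \<Rightarrow> 'p set set \<Rightarrow> 'p set \<Rightarrow> bool" where
  "subspace P L S \<longleftrightarrow> S \<subseteq> P \<and> (\<forall>l\<in>L. card (l \<inter> S) \<ge> 2 \<longrightarrow> l \<subseteq> S)"

definition hyperplane :: "'p set \<Rightarrow> 'p set set \<Rightarrow> 'p set \<Rightarrow> bool" where
  "hyperplane P L H \<longleftrightarrow> subspace P L H \<and> H \<noteq> P \<and> (\<forall>l\<in>L. l \<inter> H \<noteq> {})"

definition M_lines :: "'a \<Rightarrow> 'a set \<Rightarrow> 'a set set set \<Rightarrow> 'a set set set" where
  "M_lines z X LV = LV \<union> {{{z, x}, {z, y}, {x, y}} | x y. x \<in> X \<and> y \<in> X \<and> x \<noteq> y}"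

end

theory Submission
  imports Defs
begin

lemma tri_line:
  assumes hp: "hyperplane (P2 (insert z X)) (M_lines z X LV) H"
    and zX: "z \<notin> X" and a: "a \<in> X" and b: "b \<in> X" and ab: "a \<noteq> b"
    and two: "p \<in> {{z,a},{z,b},{a,b}}" "q \<in> {{z,a},{z,b},{a,b}}" "p \<noteq> q" "p \<in> H" "q \<in> H"
  shows "{{z,a},{z,b},{a,b}} \<subseteq> H"
proof -
  let ?l = "{{z,a},{z,b},{a,b}}"
  have l: "?l \<in> M_lines z X LV" unfolding M_lines_def using a b ab by blast
  have "{p,q} \<subseteq> ?l \<inter> H" using two by auto
  hence "card {p,q} \<le> card (?l \<inter> H)" by (intro card_mono) auto
  hence "card (?l \<inter> H) \<ge> 2" using two(3) by simp
  thus ?thesis using hp l unfolding hyperplane_def subspace_def by blast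
qed

theorem lemma3p2:
  fixes X :: "'a set" and z :: 'a and n :: nat
    and LV :: "'a set set set" and H :: "'a set set" and x :: 'a
  assumes "finite X" and "card X = n" and "z \<notin> X"
    and "configuration (P2 X) LV (n choose 2) (n - 2) (n choose 3) 3"
    and "hyperplane (P2 (insert z X)) (M_lines z X LV) H"
    and "x \<in> X"
    and "\<exists>w\<in>{y\<in>X. y = x \<or> (y \<noteq> x \<and> {x, y} \<in> H)}. {z, w} \<in> H"
  shows "\<forall>y\<in>{y\<in>X. y = x \<or> (y \<noteq> x \<and> {x, y} \<in> H)}. {z, y} \<in> H"
proof -
  have zx: "{z,x} \<in> H"
  proof -
    obtain w where w: "w \<in> X" "w = x \<or> (w \<noteq> x \<and> {x, w} \<in> H)" "{z,w} \<in> H"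
      using assms(7) by blast
    show ?thesis
    proof (cases "w = x")
      case True thus ?thesis using w by simp
    next
      case False
      have ne: "{z,w} \<noteq> {x,w}" using assms(3,6) w(1) by (auto simp: doubleton_eq_iff)
      have "{{z,x},{z,w},{x,w}} \<subseteq> H"
        by (rule tri_line[OF assms(5) assms(3) assms(6) w(1) False[symmetric], of "{z,w}" "{x,w}"])
           (use w False ne assms(3,6) in auto)
      thus ?thesis by simp
    qed
  qed
  show ?thesis
  proof
    fix y assume y: "y \<in> {y\<in>X. y = x \<or> (y \<noteq> x \<and> {x, y} \<in> H)}"
    show "{z,y} \<in> H"
    proof (cases "y = x")
      case True thus ?thesis using zx by simp
    next
      case False
      have ne: "{z,x} \<noteq> {x,y}" using assms(3,6) y by (auto simp: doubleton_eq_iff)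
      have "{{z,x},{z,y},{x,y}} \<subseteq> H"
        by (rule tri_line[OF assms(5) assms(3) assms(6), of y "{z,x}" "{x,y}"])
           (use y False ne zx assms(3,6) in auto)
      thus ?thesis by simp
    qed
  qed
qed

end
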